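(* Let $D_L$ and $D_R$ be discrete power-law (Zipfian) distributions on the positive integers with parameters $(\alpha_L,1,\infty)$ and $(\alpha_R,1,\infty)$, with means $\mu_L=\mathbb{E}[D_L]$, $\mu_R=\mathbb{E}[D_R]$, and suppose $n_L\mu_L=n_R\mu_R$. Consider the following sampler: draw i.i.d. weights $w_u\sim D_L$ for $u\in L=\{1,\dots,n_L\}$ and $w_v\sim D_R$ for $v\in R$ ($|R|=n_R$); for each pair $(a,b)$ of a distinct value $a$ occurring among the left weights and a distinct value $b$ occurring among the right weights, let $V_L=\{u\in L: w_u=a\}$, $V_R=\{v\in R:w_v=b\}$, draw $e\sim\mathrm{Binomial}(|V_L||V_R|,\ ab/(n_R\mu_R))$, and add $e$ edges chosen uniformly without replacement from $V_L\times V_R$. Assuming each binomial draw and each per-pair bookkeeping step costs $O(1)$ time and each edge costs $O(1)$ time to draw and add, the expected running time is $O\!\left(n_L^{1/(\alpha_L-1)}n_R^{1/(\alpha_R-1)}+\mu_Ln_L\right)$. For $\alpha_L,\alpha_R>3$ the second term dominates, so the running time is within a constant factor of the expected number of output edges, hence asymptotically optimal.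
   Context: Discrete power-law (Zipfian) distribution with parameters $(\alpha,1,\infty)$, $\alpha>1$: $\Pr[W=k]\propto k^{-\alpha}$ for integers $k\ge1$. (For $\alpha\le 2$ the mean is infinite; the statement is meaningful when $\mu_L,\mu_R<\infty$.) *)

theory Defs
  imports "HOL-Probability.Probability"
begin

definition zipf_weight :: "real \<Rightarrow> nat \<Rightarrow> real" where
  "zipf_weight \<alpha> k = (if k \<ge> 1 then real k powr (-\<alpha>) else 0)"

definition zipf_pmf :: "real \<Rightarrow> nat pmf" where
  "zipf_pmf \<alpha> = embed_pmf (\<lambda>k. zipf_weight \<alpha> k / (\<Sum>j. zipf_weight \<alpha> j))"

definition zipf_mean :: "real \<Rightarrow> real" where
  "zipf_mean \<alpha> = measure_pmf.expectation (zipf_pmf \<alpha>) real"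

text \<open>The result is the pair (running time, number of output edges),
  where the running time counts one unit per weight draw, one unit per pair (binomial draw and
  bookkeeping), and one unit per edge drawn and added.  Since the e(a,b) edges are chosen
  uniformly without replacement from V_L x V_R, exactly e(a,b) distinct edges are output.\<close>

definition sampler_pmf :: "real \<Rightarrow> real \<Rightarrow> nat \<Rightarrow> nat \<Rightarrow> (nat \<times> nat) pmf" where
  "sampler_pmf \<alpha>L \<alpha>R nL nR =
     do {
       wL \<leftarrow> Pi_pmf {..<nL} 0 (\<lambda>_. zipf_pmf \<alpha>L);
       wR \<leftarrow> Pi_pmf {..<nR} 0 (\<lambda>_. zipf_pmf \<alpha>R);
       let P = (wL ` {..<nL}) \<times> (wR ` {..<nR});
       e \<leftarrow> Pi_pmf P 0 (\<lambda>(a, b).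
              binomial_pmf (card {u\<in>{..<nL}. wL u = a} * card {v\<in>{..<nR}. wR v = b})
                (min 1 (real a * real b / (real nR * zipf_mean \<alpha>R))));
       return_pmf (nL + nR + card P + (\<Sum>x\<in>P. e x), \<Sum>x\<in>P. e x)
     }"

definition expected_time :: "real \<Rightarrow> real \<Rightarrow> nat \<Rightarrow> nat \<Rightarrow> real" where
  "expected_time \<alpha>L \<alpha>R nL nR =
     measure_pmf.expectation (sampler_pmf \<alpha>L \<alpha>R nL nR) (\<lambda>r. real (fst r))"

definition expected_edges :: "real \<Rightarrow> real \<Rightarrow> nat \<Rightarrow> nat \<Rightarrow> real" where
  "expected_edges \<alpha>L \<alpha>R nL nR =
     measure_pmf.expectation (sampler_pmf \<alpha>L \<alpha>R nL nR) (\<lambda>r. real (snd r))"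

end

theory Submission
  imports Defs
begin

lemma binom_mean:
  assumes "p \<in> {0..1}"
  shows "(\<integral>\<^sup>+k. ennreal (real k) \<partial>binomial_pmf n p) = ennreal (real n * p)"
proof (induction n)
  case 0
  then show ?case using assms by (simp add: binomial_pmf_0)
next
  case (Suc n)
  have inner: "(\<integral>\<^sup>+k. ennreal (real ((if b then 1 else 0) + k)) \<partial>binomial_pmf n p)
      = ennreal (if b then 1 else 0) + ennreal (real n * p)" for b
  proof -
    have "(\<integral>\<^sup>+k. ennreal (real ((if b then 1 else 0) + k)) \<partial>binomial_pmf n p)
       = (\<integral>\<^sup>+k. ennreal (if b then 1 else 0) + ennreal (real k) \<partial>binomial_pmf n p)"
      by (intro nn_integral_cong) (simp add: ennreal_plus[symmetric] del: ennreal_plus)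
    also have "\<dots> = ennreal (if b then 1 else 0) + (\<integral>\<^sup>+k. ennreal (real k) \<partial>binomial_pmf n p)"
      by (subst nn_integral_add) (auto simp: measure_pmf.emeasure_space_1)
    finally show ?thesis using Suc by simp
  qed
  have "(\<integral>\<^sup>+k. ennreal (real k) \<partial>binomial_pmf (Suc n) p)
      = (\<integral>\<^sup>+b. ennreal (if b then 1 else 0) + ennreal (real n * p) \<partial>bernoulli_pmf p)"
    using assms by (simp add: binomial_pmf_Suc inner del: of_nat_add)
  also have "\<dots> = (\<integral>\<^sup>+b. ennreal (if b then 1 else 0) \<partial>bernoulli_pmf p) + ennreal (real n * p)"
    by (subst nn_integral_add) (auto simp: measure_pmf.emeasure_space_1)
  also have "(\<integral>\<^sup>+b. ennreal (if b then 1 else 0) \<partial>bernoulli_pmf p) = ennreal p"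
    using assms by (subst nn_integral_measure_pmf_support[where A=UNIV]) (auto simp: UNIV_bool)
  also have "ennreal p + ennreal (real n * p) = ennreal (real (Suc n) * p)"
  proof -
    have "real (Suc n) * p = p + real n * p" by (simp add: algebra_simps)
    moreover have "ennreal p + ennreal (real n * p) = ennreal (p + real n * p)"
      using assms by (intro ennreal_plus[symmetric]) auto
    ultimately show ?thesis by metis
  qed
  finally show ?case .
qed

lemma Pi_sum_mean:
  fixes q :: "'a \<Rightarrow> nat pmf"
  assumes P: "finite P" and r: "\<And>x. x \<in> P \<Longrightarrow> (\<integral>\<^sup>+k. ennreal (real k) \<partial>q x) = ennreal (r x)"
    and rnn: "\<And>x. x \<in> P \<Longrightarrow> r x \<ge> 0"
  shows "(\<integral>\<^sup>+e. ennreal (real (c + (\<Sum>x\<in>P. e x))) \<partial>Pi_pmf P 0 q) = ennreal (real c + (\<Sum>x\<in>P. r x))"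
proof -
  have "(\<integral>\<^sup>+e. ennreal (real (c + (\<Sum>x\<in>P. e x))) \<partial>Pi_pmf P 0 q)
      = (\<integral>\<^sup>+e. ennreal (real c) + (\<Sum>x\<in>P. ennreal (real (e x))) \<partial>Pi_pmf P 0 q)"
    by (intro nn_integral_cong) (simp add: ennreal_plus[symmetric] of_nat_sum sum_nonneg del: ennreal_plus)
  also have "\<dots> = ennreal (real c) + (\<Sum>x\<in>P. \<integral>\<^sup>+e. ennreal (real (e x)) \<partial>Pi_pmf P 0 q)"
    by (subst nn_integral_add) (auto simp: nn_integral_sum measure_pmf.emeasure_space_1 simp del: sum_ennreal)
  also have "(\<Sum>x\<in>P. \<integral>\<^sup>+e. ennreal (real (e x)) \<partial>Pi_pmf P 0 q) = (\<Sum>x\<in>P. ennreal (r x))"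
  proof (intro sum.cong refl)
    fix x assume x: "x \<in> P"
    have "(\<integral>\<^sup>+e. ennreal (real (e x)) \<partial>Pi_pmf P 0 q)
        = (\<integral>\<^sup>+k. ennreal (real k) \<partial>map_pmf (\<lambda>e. e x) (Pi_pmf P 0 q))" by simp
    also have "\<dots> = ennreal (r x)" using x P r by (simp add: Pi_pmf_component)
    finally show "(\<integral>\<^sup>+e. ennreal (real (e x)) \<partial>Pi_pmf P 0 q) = ennreal (r x)" .
  qed
  also have "ennreal (real c) + (\<Sum>x\<in>P. ennreal (r x)) = ennreal (real c + (\<Sum>x\<in>P. r x))"
    using rnn by (simp add: sum_nonneg ennreal_plus[symmetric] del: ennreal_plus)
  finally show ?thesis .
qed

lemma Pi_sum_mean_iid:
  fixes Z :: "nat pmf"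
  assumes "(\<integral>\<^sup>+k. ennreal (real k) \<partial>Z) = ennreal \<mu>" "\<mu> \<ge> 0" 
  shows "(\<integral>\<^sup>+w. ennreal (\<Sum>u<n. real (w u)) \<partial>Pi_pmf {..<n} 0 (\<lambda>_. Z)) = ennreal (real n * \<mu>)"
proof -
  have "(\<integral>\<^sup>+w. ennreal (\<Sum>u<n. real (w u)) \<partial>Pi_pmf {..<n} 0 (\<lambda>_. Z))
     = (\<integral>\<^sup>+w. ennreal (real (0 + (\<Sum>u<n. w u))) \<partial>Pi_pmf {..<n} 0 (\<lambda>_. Z))"
    by (simp add: of_nat_sum)
  also have "\<dots> = ennreal (real 0 + (\<Sum>u<n. \<mu>))"
    by (rule Pi_sum_mean) (use assms in \<open>auto\<close>)
  finally show ?thesis by simp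
qed

lemma zipf_weight_eq: "zipf_weight \<alpha> k = real k powr (-\<alpha>)"
  by (simp add: zipf_weight_def)

lemma zipf_set:
  assumes "\<alpha> > 1" "k \<in> set_pmf (zipf_pmf \<alpha>)"
  shows "k \<ge> 1"
proof -
  define S where "S = (\<Sum>j. zipf_weight \<alpha> j)"
  have sm: "summable (zipf_weight \<alpha>)"
    unfolding zipf_weight_eq[abs_def] using assms(1) by (simp add: summable_real_powr_iff)
  have "0 < S" unfolding S_def
    by (rule suminf_pos2[OF sm, of 1]) (auto simp: zipf_weight_def)
  have nn: "\<And>k. 0 \<le> zipf_weight \<alpha> k / S" using \<open>0 < S\<close> by (simp add: zipf_weight_def)
  have "(\<integral>\<^sup>+k. ennreal (zipf_weight \<alpha> k / S) \<partial>count_space UNIV) = ennreal (\<Sum>k. zipf_weight \<alpha> k / S)"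
    by (simp add: nn_integral_count_space_nat suminf_ennreal2 nn summable_divide sm)
  also have "(\<Sum>k. zipf_weight \<alpha> k / S) = 1"
    using \<open>0 < S\<close> by (simp add: suminf_divide sm S_def[symmetric])
  finally have pr: "(\<integral>\<^sup>+k. ennreal (zipf_weight \<alpha> k / S) \<partial>count_space UNIV) = 1" by simp
  have "set_pmf (zipf_pmf \<alpha>) = {k. zipf_weight \<alpha> k / S \<noteq> 0}"
    unfolding zipf_pmf_def S_def[symmetric] by (rule set_embed_pmf[OF nn pr])
  with assms(2) show ?thesis by (auto simp: zipf_weight_def split: if_splits)
qed

lemma zipf_mean_ge1:
  assumes "\<alpha> > 1" "integrable (measure_pmf (zipf_pmf \<alpha>)) real"
  shows "zipf_mean \<alpha> \<ge> 1"
proof -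
  have "measure_pmf.expectation (zipf_pmf \<alpha>) (\<lambda>_. 1::real) \<le> measure_pmf.expectation (zipf_pmf \<alpha>) real"
    using assms by (intro integral_mono_AE) (auto simp: AE_measure_pmf_iff dest: zipf_set)
  then show ?thesis by (simp add: zipf_mean_def)
qed

lemma zipf_nn_mean:
  assumes "integrable (measure_pmf (zipf_pmf \<alpha>)) real"
  shows "(\<integral>\<^sup>+k. ennreal (real k) \<partial>zipf_pmf \<alpha>) = ennreal (zipf_mean \<alpha>)"
  unfolding zipf_mean_def using assms by (intro nn_integral_eq_integral) auto

lemma card_sq_le:
  fixes A :: "nat set"
  assumes "finite A"
  shows "card A * (card A - 1) \<le> 2 * \<Sum>A"
  using assms
proof (induction "card A" arbitrary: A)
  case 0
  then show ?case by simp
next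
  case (Suc n)
  then have ne: "A \<noteq> {}" by auto
  define m where "m = Max A"
  have mA: "m \<in> A" using Suc ne by (simp add: m_def)
  have "A \<subseteq> {0..m}" using Suc by (auto simp: m_def)
  then have "card A \<le> Suc m" using card_mono[of "{0..m}" A] by simp
  then have nm: "n \<le> m" using Suc by simp
  have cA: "card (A - {m}) = n" using Suc mA by simp
  have IH: "n * (n - 1) \<le> 2 * \<Sum>(A - {m})" using Suc(1)[of "A - {m}"] cA Suc by simp
  have "\<Sum>A = m + \<Sum>(A - {m})" using Suc mA by (simp add: sum.remove)
  with IH nm have *: "Suc n * n \<le> 2 * \<Sum>A"
    by (cases n) (auto simp: algebra_simps)
  show ?case using * by (simp add: Suc(2)[symmetric])
qed

definition Hf :: "nat \<Rightarrow> nat \<Rightarrow> real \<Rightarrow> (nat\<Rightarrow>nat) \<Rightarrow> (nat\<Rightarrow>nat) \<Rightarrow> real" where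
  "Hf nL nR D wL wR = (\<Sum>x\<in>wL ` {..<nL} \<times> wR ` {..<nR}. case x of (a, b) \<Rightarrow>
      real (card {u\<in>{..<nL}. wL u = a} * card {v\<in>{..<nR}. wR v = b}) * min 1 (real a * real b / D))"

lemma sampler_nn:
  assumes D: "real nR * zipf_mean \<alpha>R \<ge> 0"
  shows "(\<integral>\<^sup>+r. ennreal (real (fst r)) \<partial>sampler_pmf \<alpha>L \<alpha>R nL nR) =
    (\<integral>\<^sup>+wL. \<integral>\<^sup>+wR. ennreal (real (nL + nR + card (wL ` {..<nL} \<times> wR ` {..<nR}))
        + Hf nL nR (real nR * zipf_mean \<alpha>R) wL wR) \<partial>Pi_pmf {..<nR} 0 (\<lambda>_. zipf_pmf \<alpha>R) \<partial>Pi_pmf {..<nL} 0 (\<lambda>_. zipf_pmf \<alpha>L))"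
    and "(\<integral>\<^sup>+r. ennreal (real (snd r)) \<partial>sampler_pmf \<alpha>L \<alpha>R nL nR) =
    (\<integral>\<^sup>+wL. \<integral>\<^sup>+wR. ennreal (real 0
        + Hf nL nR (real nR * zipf_mean \<alpha>R) wL wR) \<partial>Pi_pmf {..<nR} 0 (\<lambda>_. zipf_pmf \<alpha>R) \<partial>Pi_pmf {..<nL} 0 (\<lambda>_. zipf_pmf \<alpha>L))"
proof -
  define D where "D = real nR * zipf_mean \<alpha>R"
  have key: "(\<integral>\<^sup>+e. ennreal (real (c + (\<Sum>x\<in>wL ` {..<nL} \<times> wR ` {..<nR}. e x))) \<partial>Pi_pmf (wL ` {..<nL} \<times> wR ` {..<nR}) 0
       (\<lambda>(a, b). binomial_pmf (card {u\<in>{..<nL}. wL u = a} * card {v\<in>{..<nR}. wR v = b})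
                (min 1 (real a * real b / D))))
     = ennreal (real c + Hf nL nR D wL wR)" for c wL wR
    unfolding Hf_def
  proof (rule Pi_sum_mean)
    fix x assume "x \<in> wL ` {..<nL} \<times> wR ` {..<nR}"
    obtain a b where x: "x = (a, b)" by (cases x)
    have p: "min 1 (real a * real b / D) \<in> {0..1}" using D by (auto simp: D_def)
    show "(\<integral>\<^sup>+k. ennreal (real k) \<partial>(case x of (a, b) \<Rightarrow> binomial_pmf (card {u\<in>{..<nL}. wL u = a} * card {v\<in>{..<nR}. wR v = b})
                (min 1 (real a * real b / D))))
      = ennreal (case x of (a, b) \<Rightarrow> real (card {u\<in>{..<nL}. wL u = a} * card {v\<in>{..<nR}. wR v = b}) * min 1 (real a * real b / D))"
      unfolding x using binom_mean[OF p] by simp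
    show "0 \<le> (case x of (a, b) \<Rightarrow> real (card {u\<in>{..<nL}. wL u = a} * card {v\<in>{..<nR}. wR v = b}) * min 1 (real a * real b / D))"
      unfolding x using p by simp
  qed simp
  show "(\<integral>\<^sup>+r. ennreal (real (fst r)) \<partial>sampler_pmf \<alpha>L \<alpha>R nL nR) =
    (\<integral>\<^sup>+wL. \<integral>\<^sup>+wR. ennreal (real (nL + nR + card (wL ` {..<nL} \<times> wR ` {..<nR}))
        + Hf nL nR (real nR * zipf_mean \<alpha>R) wL wR) \<partial>Pi_pmf {..<nR} 0 (\<lambda>_. zipf_pmf \<alpha>R) \<partial>Pi_pmf {..<nL} 0 (\<lambda>_. zipf_pmf \<alpha>L))"
    unfolding sampler_pmf_def D_def[symmetric] by (simp only: nn_integral_bind_pmf Let_def nn_integral_return_pmf zero_le fst_conv key)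
  show "(\<integral>\<^sup>+r. ennreal (real (snd r)) \<partial>sampler_pmf \<alpha>L \<alpha>R nL nR) =
    (\<integral>\<^sup>+wL. \<integral>\<^sup>+wR. ennreal (real 0
        + Hf nL nR (real nR * zipf_mean \<alpha>R) wL wR) \<partial>Pi_pmf {..<nR} 0 (\<lambda>_. zipf_pmf \<alpha>R) \<partial>Pi_pmf {..<nL} 0 (\<lambda>_. zipf_pmf \<alpha>L))"
    unfolding sampler_pmf_def D_def[symmetric] using key[where c=0] unfolding add_0 by (simp only: nn_integral_bind_pmf Let_def nn_integral_return_pmf zero_le snd_conv)
qed

lemma fiber_sum:
  fixes w :: "nat \<Rightarrow> nat" and g :: "nat \<Rightarrow> real"
  assumes "finite U"
  shows "(\<Sum>a\<in>w ` U. real (card {u\<in>U. w u = a}) * g a) = (\<Sum>u\<in>U. g (w u))"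
proof -
  have "(\<Sum>u\<in>U. g (w u)) = (\<Sum>a\<in>w ` U. \<Sum>u\<in>{x\<in>U. w x = a}. g (w u))"
    by (rule sum.image_gen[OF assms])
  also have "\<dots> = (\<Sum>a\<in>w ` U. real (card {u\<in>U. w u = a}) * g a)"
    by (intro sum.cong refl) simp
  finally show ?thesis by simp
qed

lemma card_img_bound:
  fixes w :: "nat \<Rightarrow> nat"
  shows "real (card (w ` {..<n})) ^ 2 \<le> 2 * (\<Sum>u<n. real (w u)) + real n"
proof -
  define d where "d = card (w ` {..<n})"
  have "d * (d - 1) \<le> 2 * \<Sum>(w ` {..<n})" unfolding d_def by (rule card_sq_le) simp
  also have "\<Sum>(w ` {..<n}) \<le> (\<Sum>u<n. w u)"
    using sum_image_le[of "{..<n}" id w] by simp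
  finally have 1: "d * (d - 1) \<le> 2 * (\<Sum>u<n. w u)" by simp
  have 2: "d \<le> n" unfolding d_def using card_image_le[of "{..<n}" w] by simp
  have "real d ^ 2 = real (d * (d - 1)) + real d"
    by (cases d) (auto simp: power2_eq_square algebra_simps)
  also have "\<dots> \<le> real (2 * (\<Sum>u<n. w u)) + real n"
    using 1 2 by (intro add_mono) (simp_all only: of_nat_le_iff)
  finally show ?thesis by (simp add: d_def of_nat_sum)
qed

lemma cardP_bound:
  fixes wL wR :: "nat \<Rightarrow> nat"
  shows "real (card (wL ` {..<nL} \<times> wR ` {..<nR}))
     \<le> (\<Sum>u<nL. real (wL u)) + (\<Sum>v<nR. real (wR v)) + real nL + real nR"
proof -
  define x where "x = real (card (wL ` {..<nL}))"
  define y where "y = real (card (wR ` {..<nR}))"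
  have "real (card (wL ` {..<nL} \<times> wR ` {..<nR})) = x * y"
    by (simp add: x_def y_def card_cartesian_product)
  also have "\<dots> \<le> (x^2 + y^2) / 2"
  proof -
    have "0 \<le> (x - y)^2" by simp
    also have "(x - y)^2 = x^2 + y^2 - 2 * (x * y)" by (simp add: power2_eq_square algebra_simps)
    finally show ?thesis by simp
  qed
  also have "\<dots> \<le> (2 * (\<Sum>u<nL. real (wL u)) + real nL + (2 * (\<Sum>v<nR. real (wR v)) + real nR)) / 2"
    using card_img_bound[of wL nL] card_img_bound[of wR nR] unfolding x_def y_def
    by (intro divide_right_mono add_mono) auto
  also have "\<dots> \<le> (\<Sum>u<nL. real (wL u)) + (\<Sum>v<nR. real (wR v)) + real nL + real nR"
    by simp
  finally show ?thesis .
qed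

lemma H_upper:
  fixes wL wR :: "nat \<Rightarrow> nat"
  assumes D: "D \<ge> 0"
  shows "Hf nL nR D wL wR \<le> (\<Sum>u<nL. real (wL u)) * (\<Sum>v<nR. real (wR v)) / D"
proof -
  let ?A = "wL ` {..<nL}" and ?B = "wR ` {..<nR}"
  let ?cL = "\<lambda>a. real (card {u\<in>{..<nL}. wL u = a})"
  let ?cR = "\<lambda>b. real (card {v\<in>{..<nR}. wR v = b})"
  have "Hf nL nR D wL wR \<le> (\<Sum>x\<in>?A \<times> ?B. case x of (a, b) \<Rightarrow> (?cL a * real a) * (?cR b * real b) / D)"
    unfolding Hf_def
  proof (intro sum_mono, clarify)
    fix a b
    have "min 1 (real a * real b / D) \<le> real a * real b / D" by simp
    then have "?cL a * ?cR b * min 1 (real a * real b / D) \<le> ?cL a * ?cR b * (real a * real b / D)"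
      by (intro mult_left_mono) auto
    then show "real (card {u\<in>{..<nL}. wL u = a} * card {v\<in>{..<nR}. wR v = b}) * min 1 (real a * real b / D)
       \<le> ?cL a * real a * (?cR b * real b) / D" by (simp add: algebra_simps)
  qed
  also have "\<dots> = (\<Sum>a\<in>?A. \<Sum>b\<in>?B. (?cL a * real a) * (?cR b * real b) / D)"
    by (subst sum.cartesian_product) simp
  also have "\<dots> = (\<Sum>a\<in>?A. ?cL a * real a) * (\<Sum>b\<in>?B. ?cR b * real b) / D"
    by (simp add: sum_product sum_divide_distrib)
  also have "\<dots> = (\<Sum>u<nL. real (wL u)) * (\<Sum>v<nR. real (wR v)) / D"
    using fiber_sum[of "{..<nL}" wL real] fiber_sum[of "{..<nR}" wR real] by simp
  finally show ?thesis .
qed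

lemma H_lower:
  fixes wL wR :: "nat \<Rightarrow> nat"
  assumes D: "D \<ge> 1" and L: "\<And>u. u < nL \<Longrightarrow> wL u \<ge> 1" and R: "\<And>v. v < nR \<Longrightarrow> wR v \<ge> 1"
  shows "Hf nL nR D wL wR \<ge> real nL * real nR / D"
proof -
  let ?A = "wL ` {..<nL}" and ?B = "wR ` {..<nR}"
  let ?cL = "\<lambda>a. real (card {u\<in>{..<nL}. wL u = a})"
  let ?cR = "\<lambda>b. real (card {v\<in>{..<nR}. wR v = b})"
  have "real nL * real nR / D = (\<Sum>a\<in>?A. ?cL a * 1) * (\<Sum>b\<in>?B. ?cR b * 1) / D"
    using fiber_sum[of "{..<nL}" wL "\<lambda>_. 1"] fiber_sum[of "{..<nR}" wR "\<lambda>_. 1"] by simp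
  also have "\<dots> = (\<Sum>a\<in>?A. \<Sum>b\<in>?B. (?cL a * 1) * (?cR b * 1) / D)"
    by (simp add: sum_product sum_divide_distrib)
  also have "\<dots> = (\<Sum>x\<in>?A \<times> ?B. case x of (a, b) \<Rightarrow> (?cL a * 1) * (?cR b * 1) / D)"
    by (subst sum.cartesian_product) simp
  also have "\<dots> \<le> Hf nL nR D wL wR"
    unfolding Hf_def
  proof (rule sum_mono)
    fix x assume "x \<in> ?A \<times> ?B"
    then obtain a b where x: "x = (a, b)" and a: "a \<in> ?A" and b: "b \<in> ?B" by blast
    have "a \<ge> 1" "b \<ge> 1" using a b L R by auto
    then have "real a * real b \<ge> 1"
      using mult_mono[of 1 "real a" 1 "real b"] by simp
    then have "1 / D \<le> min 1 (real a * real b / D)" using D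
      by (auto simp: divide_right_mono)
    then have "?cL a * ?cR b * (1 / D) \<le> ?cL a * ?cR b * min 1 (real a * real b / D)"
      by (intro mult_left_mono) auto
    then show "(case x of (a, b) \<Rightarrow> ?cL a * 1 * (?cR b * 1) / D) \<le> (case x of (a, b) \<Rightarrow> real (card {u\<in>{..<nL}. wL u = a} * card {v\<in>{..<nR}. wR v = b}) * min 1 (real a * real b / D))"
      by (simp add: x)
  qed
  finally show ?thesis .
qed

lemma double_int:
  fixes M :: "'a pmf" and N :: "'b pmf"
  assumes f: "\<And>x. f x \<ge> 0" and g: "\<And>y. g y \<ge> 0" and c0: "c0 \<ge> 0" and k: "k \<ge> 0"
    and a: "(\<integral>\<^sup>+x. ennreal (f x) \<partial>M) = ennreal a" and b: "(\<integral>\<^sup>+y. ennreal (g y) \<partial>N) = ennreal b"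
    and a0: "a \<ge> 0" and b0: "b \<ge> 0"
  shows "(\<integral>\<^sup>+x. \<integral>\<^sup>+y. ennreal (c0 + f x + g y + k * f x * g y) \<partial>N \<partial>M) = ennreal (c0 + a + b + k * a * b)"
proof -
  have inner: "(\<integral>\<^sup>+y. ennreal (c0 + f x + g y + k * f x * g y) \<partial>N) = ennreal (c0 + f x) + ennreal b + ennreal (k * f x) * ennreal b" for x
  proof -
    have "(\<integral>\<^sup>+y. ennreal (c0 + f x + g y + k * f x * g y) \<partial>N)
       = (\<integral>\<^sup>+y. (ennreal (c0 + f x) + ennreal (g y)) + ennreal (k * f x) * ennreal (g y) \<partial>N)"
      using f g c0 k by (intro nn_integral_cong) (simp add: ennreal_plus[symmetric] ennreal_mult[symmetric] del: ennreal_plus)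
    also have "\<dots> = (\<integral>\<^sup>+y. ennreal (c0 + f x) + ennreal (g y) \<partial>N) + (\<integral>\<^sup>+y. ennreal (k * f x) * ennreal (g y) \<partial>N)"
      by (rule nn_integral_add) auto
    also have "(\<integral>\<^sup>+y. ennreal (c0 + f x) + ennreal (g y) \<partial>N) = ennreal (c0 + f x) + ennreal b"
      by (subst nn_integral_add) (auto simp: b measure_pmf.emeasure_space_1)
    also have "(\<integral>\<^sup>+y. ennreal (k * f x) * ennreal (g y) \<partial>N) = ennreal (k * f x) * ennreal b"
      by (subst nn_integral_cmult) (auto simp: b)
    finally show ?thesis .
  qed
  have "(\<integral>\<^sup>+x. \<integral>\<^sup>+y. ennreal (c0 + f x + g y + k * f x * g y) \<partial>N \<partial>M)
      = (\<integral>\<^sup>+x. (ennreal c0 + ennreal b) + ennreal (f x) + ennreal (k * b) * ennreal (f x) \<partial>M)"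
    unfolding inner using f c0 k b0
    by (intro nn_integral_cong) (simp add: ennreal_plus[symmetric] ennreal_mult[symmetric] algebra_simps del: ennreal_plus)
  also have "\<dots> = (\<integral>\<^sup>+x. (ennreal c0 + ennreal b) + ennreal (f x) \<partial>M) + (\<integral>\<^sup>+x. ennreal (k * b) * ennreal (f x) \<partial>M)"
    by (rule nn_integral_add) auto
  also have "(\<integral>\<^sup>+x. (ennreal c0 + ennreal b) + ennreal (f x) \<partial>M) = (ennreal c0 + ennreal b) + ennreal a"
    by (subst nn_integral_add) (auto simp: a measure_pmf.emeasure_space_1)
  also have "(\<integral>\<^sup>+x. ennreal (k * b) * ennreal (f x) \<partial>M) = ennreal (k * b) * ennreal a"
    by (subst nn_integral_cmult) (auto simp: a)
  also have "(ennreal c0 + ennreal b) + ennreal a + ennreal (k * b) * ennreal a = ennreal (c0 + a + b + k * a * b)"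
    using c0 k a0 b0 by (simp add: ennreal_plus[symmetric] ennreal_mult[symmetric] algebra_simps del: ennreal_plus)
  finally show ?thesis .
qed

lemma Pi_support:
  fixes n :: nat and Z :: "nat pmf"
  assumes "w \<in> set_pmf (Pi_pmf {..<n} 0 (\<lambda>_. Z))" "u < n"
  shows "w u \<in> set_pmf Z"
proof -
  have "w \<in> PiE_dflt {..<n} 0 (set_pmf \<circ> (\<lambda>_. Z))"
    using assms(1) set_Pi_pmf_subset'[of "{..<n}" 0 "\<lambda>_. Z", OF finite_lessThan] by blast
  then show ?thesis using assms(2) unfolding PiE_dflt_def by auto
qed

lemma core:
  fixes \<alpha>L \<alpha>R :: real
  assumes "\<alpha>L > 1" and "\<alpha>R > 1"
    and intL: "integrable (measure_pmf (zipf_pmf \<alpha>L)) real"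
    and intR: "integrable (measure_pmf (zipf_pmf \<alpha>R)) real"
    and eq: "real nL * zipf_mean \<alpha>L = real nR * zipf_mean \<alpha>R"
  shows "expected_time \<alpha>L \<alpha>R nL nR \<le> 7 * zipf_mean \<alpha>L * real nL"
    and "expected_edges \<alpha>L \<alpha>R nL nR \<ge> real nL / zipf_mean \<alpha>R"
proof -
  define \<mu>L where "\<mu>L = zipf_mean \<alpha>L"
  define \<mu>R where "\<mu>R = zipf_mean \<alpha>R"
  define D where "D = real nR * \<mu>R"
  define ZL where "ZL = Pi_pmf {..<nL} 0 (\<lambda>_. zipf_pmf \<alpha>L)"
  define ZR where "ZR = Pi_pmf {..<nR} 0 (\<lambda>_. zipf_pmf \<alpha>R)"
  define SL where "SL = (\<lambda>w. \<Sum>u<nL. real (w u))"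
  define SR where "SR = (\<lambda>w. \<Sum>v<nR. real (w v))"
  have mL: "\<mu>L \<ge> 1" unfolding \<mu>L_def using assms zipf_mean_ge1 by blast
  have mR: "\<mu>R \<ge> 1" unfolding \<mu>R_def using assms zipf_mean_ge1 by blast
  have DL: "D = real nL * \<mu>L" using eq by (simp add: D_def \<mu>L_def \<mu>R_def)
  have D0: "D \<ge> 0" using DL mL by simp
  have SL0: "SL w \<ge> 0" for w unfolding SL_def by (simp add: sum_nonneg)
  have SR0: "SR w \<ge> 0" for w unfolding SR_def by (simp add: sum_nonneg)
  have iL: "(\<integral>\<^sup>+w. ennreal (SL w) \<partial>ZL) = ennreal (real nL * \<mu>L)"
    unfolding SL_def ZL_def \<mu>L_def
    by (rule Pi_sum_mean_iid) (use zipf_nn_mean[OF intL] mL in \<open>auto simp: \<mu>L_def\<close>)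
  have iR: "(\<integral>\<^sup>+w. ennreal (SR w) \<partial>ZR) = ennreal (real nR * \<mu>R)"
    unfolding SR_def ZR_def \<mu>R_def
    by (rule Pi_sum_mean_iid) (use zipf_nn_mean[OF intR] mR in \<open>auto simp: \<mu>R_def\<close>)
  define c0 where "c0 = 2 * real nL + 2 * real nR"
  define V where "V = c0 + real nL * \<mu>L + real nR * \<mu>R + (1 / D) * (real nL * \<mu>L) * (real nR * \<mu>R)"
  have ET: "(\<integral>\<^sup>+r. ennreal (real (fst r)) \<partial>sampler_pmf \<alpha>L \<alpha>R nL nR) =
    (\<integral>\<^sup>+wL. \<integral>\<^sup>+wR. ennreal (real (nL + nR + card (wL ` {..<nL} \<times> wR ` {..<nR})) + Hf nL nR D wL wR) \<partial>ZR \<partial>ZL)"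
    unfolding ZL_def ZR_def D_def \<mu>R_def by (rule sampler_nn(1)) (use D0 in \<open>simp add: D_def \<mu>R_def\<close>)
  have EE: "(\<integral>\<^sup>+r. ennreal (real (snd r)) \<partial>sampler_pmf \<alpha>L \<alpha>R nL nR) =
    (\<integral>\<^sup>+wL. \<integral>\<^sup>+wR. ennreal (real 0 + Hf nL nR D wL wR) \<partial>ZR \<partial>ZL)"
    unfolding ZL_def ZR_def D_def \<mu>R_def by (rule sampler_nn(2)) (use D0 in \<open>simp add: D_def \<mu>R_def\<close>)
  have Hnn: "Hf nL nR D wL wR \<ge> 0" for wL wR
    unfolding Hf_def using D0 by (intro sum_nonneg) (auto split: prod.splits)
  have pw: "real (nL + nR + card (wL ` {..<nL} \<times> wR ` {..<nR})) + Hf nL nR D wL wR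
      \<le> c0 + SL wL + SR wR + (1 / D) * SL wL * SR wR" for wL wR
    using cardP_bound[of wL nL wR nR] H_upper[OF D0, of nL nR wL wR]
    by (simp add: c0_def SL_def SR_def)
  have ETle: "(\<integral>\<^sup>+r. ennreal (real (fst r)) \<partial>sampler_pmf \<alpha>L \<alpha>R nL nR) \<le> ennreal V"
  proof -
    have "(\<integral>\<^sup>+wL. \<integral>\<^sup>+wR. ennreal (real (nL + nR + card (wL ` {..<nL} \<times> wR ` {..<nR})) + Hf nL nR D wL wR) \<partial>ZR \<partial>ZL)
       \<le> (\<integral>\<^sup>+wL. \<integral>\<^sup>+wR. ennreal (c0 + SL wL + SR wR + (1 / D) * SL wL * SR wR) \<partial>ZR \<partial>ZL)"
      by (intro nn_integral_mono ennreal_leI pw)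
    also have "\<dots> = ennreal V" unfolding V_def
      by (rule double_int) (use SL0 SR0 D0 mL mR iL iR in \<open>auto simp: c0_def\<close>)
    finally show ?thesis using ET by simp
  qed
  have V: "V \<le> 7 * \<mu>L * real nL"
  proof -
    have "(1 / D) * (real nL * \<mu>L) * (real nR * \<mu>R) = real nL * \<mu>L"
      using DL D_def by (cases "D = 0") (auto simp: field_simps)
    moreover have "real nR \<le> real nL * \<mu>L"
      using mult_left_mono[OF mR, of "real nR"] DL D_def by simp
    moreover have "real nL \<le> real nL * \<mu>L" using mult_left_mono[OF mL, of "real nL"] by simp
    ultimately show ?thesis unfolding V_def c0_def using DL D_def by (simp add: algebra_simps)
  qed
  have et: "expected_time \<alpha>L \<alpha>R nL nR = enn2real (\<integral>\<^sup>+r. ennreal (real (fst r)) \<partial>sampler_pmf \<alpha>L \<alpha>R nL nR)"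
    unfolding expected_time_def by (rule integral_eq_nn_integral) auto
  have ee: "expected_edges \<alpha>L \<alpha>R nL nR = enn2real (\<integral>\<^sup>+r. ennreal (real (snd r)) \<partial>sampler_pmf \<alpha>L \<alpha>R nL nR)"
    unfolding expected_edges_def by (rule integral_eq_nn_integral) auto
  have V0: "V \<ge> 0" using mL mR D0 unfolding V_def c0_def by (intro add_nonneg_nonneg mult_nonneg_nonneg divide_nonneg_nonneg) auto
  show "expected_time \<alpha>L \<alpha>R nL nR \<le> 7 * zipf_mean \<alpha>L * real nL"
    unfolding et using enn2real_leI[OF _ ETle] V V0 by (simp add: \<mu>L_def)
  show "expected_edges \<alpha>L \<alpha>R nL nR \<ge> real nL / zipf_mean \<alpha>R"
  proof (cases "nL = 0")
    case True
    have "expected_edges \<alpha>L \<alpha>R nL nR \<ge> 0" unfolding expected_edges_def by simp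
    then show ?thesis using True by simp
  next
    case False
    have "real nL \<ge> 1" using False by simp
    then have D1: "D \<ge> 1" using DL mL mult_mono[of 1 "real nL" 1 \<mu>L] by simp
    have nR: "nR > 0" using D1 D_def by (cases nR) auto
    have low: "ennreal (real nL * real nR / D) \<le> (\<integral>\<^sup>+wL. \<integral>\<^sup>+wR. ennreal (real 0 + Hf nL nR D wL wR) \<partial>ZR \<partial>ZL)"
    proof -
      have "ennreal (real nL * real nR / D) = (\<integral>\<^sup>+wL. \<integral>\<^sup>+wR. ennreal (real nL * real nR / D) \<partial>ZR \<partial>ZL)"
        by (simp add: measure_pmf.emeasure_space_1)
      also have "\<dots> \<le> (\<integral>\<^sup>+wL. \<integral>\<^sup>+wR. ennreal (real 0 + Hf nL nR D wL wR) \<partial>ZR \<partial>ZL)"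
      proof (intro nn_integral_mono_AE)
        show "AE wL in ZL. (\<integral>\<^sup>+wR. ennreal (real nL * real nR / D) \<partial>ZR) \<le> (\<integral>\<^sup>+wR. ennreal (real 0 + Hf nL nR D wL wR) \<partial>ZR)"
          unfolding AE_measure_pmf_iff
        proof (intro ballI nn_integral_mono_AE)
          fix wL assume wL: "wL \<in> set_pmf ZL"
          show "AE wR in ZR. ennreal (real nL * real nR / D) \<le> ennreal (real 0 + Hf nL nR D wL wR)"
            unfolding AE_measure_pmf_iff
          proof (intro ballI ennreal_leI)
            fix wR assume wR: "wR \<in> set_pmf ZR"
            have "Hf nL nR D wL wR \<ge> real nL * real nR / D"
            proof (rule H_lower[OF D1])
              show "wL u \<ge> 1" if "u < nL" for u
                using zipf_set[OF assms(1) Pi_support[OF wL[unfolded ZL_def] that]] .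
              show "wR v \<ge> 1" if "v < nR" for v
                using zipf_set[OF assms(2) Pi_support[OF wR[unfolded ZR_def] that]] .
            qed
            then show "real nL * real nR / D \<le> real 0 + Hf nL nR D wL wR" by simp
          qed
        qed
      qed
      finally show ?thesis .
    qed
    have "(\<integral>\<^sup>+wL. \<integral>\<^sup>+wR. ennreal (real 0 + Hf nL nR D wL wR) \<partial>ZR \<partial>ZL)
        \<le> (\<integral>\<^sup>+wL. \<integral>\<^sup>+wR. ennreal (real (nL + nR + card (wL ` {..<nL} \<times> wR ` {..<nR})) + Hf nL nR D wL wR) \<partial>ZR \<partial>ZL)"
      by (intro nn_integral_mono ennreal_leI) simp
    also have "\<dots> \<le> ennreal V" using ETle ET by simp
    finally have fin0: "(\<integral>\<^sup>+wL. \<integral>\<^sup>+wR. ennreal (real 0 + Hf nL nR D wL wR) \<partial>ZR \<partial>ZL) \<le> ennreal V" .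
    have fin: "(\<integral>\<^sup>+wL. \<integral>\<^sup>+wR. ennreal (real 0 + Hf nL nR D wL wR) \<partial>ZR \<partial>ZL) < top"
      using le_less_trans[OF fin0 ennreal_less_top] by simp
    have "real nL * real nR / D \<le> expected_edges \<alpha>L \<alpha>R nL nR"
      unfolding ee EE using enn2real_mono[OF low fin] by (simp add: divide_nonneg_nonneg D0)
    also have "real nL * real nR / D = real nL / zipf_mean \<alpha>R"
      using nR mR by (simp add: D_def \<mu>R_def)
    finally show ?thesis .
  qed
qed

theorem mainTheorem13:
  fixes \<alpha>L \<alpha>R :: real
  assumes "\<alpha>L > 1" and "\<alpha>R > 1"
    and "integrable (measure_pmf (zipf_pmf \<alpha>L)) real"
    and "integrable (measure_pmf (zipf_pmf \<alpha>R)) real"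
  shows "(\<exists>C>0. \<forall>nL nR :: nat. real nL * zipf_mean \<alpha>L = real nR * zipf_mean \<alpha>R \<longrightarrow>
            expected_time \<alpha>L \<alpha>R nL nR
              \<le> C * (real nL powr (1 / (\<alpha>L - 1)) * real nR powr (1 / (\<alpha>R - 1))
                     + zipf_mean \<alpha>L * real nL))
       \<and> (\<alpha>L > 3 \<and> \<alpha>R > 3 \<longrightarrow>
           (\<exists>C>0. \<forall>nL nR :: nat. real nL * zipf_mean \<alpha>L = real nR * zipf_mean \<alpha>R \<longrightarrow>
              expected_time \<alpha>L \<alpha>R nL nR \<le> C * expected_edges \<alpha>L \<alpha>R nL nR))"
proof (intro conjI impI)
  have mL: "zipf_mean \<alpha>L \<ge> 1" using assms zipf_mean_ge1 by blast
  have mR: "zipf_mean \<alpha>R \<ge> 1" using assms zipf_mean_ge1 by blast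
  show "\<exists>C>0. \<forall>nL nR :: nat. real nL * zipf_mean \<alpha>L = real nR * zipf_mean \<alpha>R \<longrightarrow>
            expected_time \<alpha>L \<alpha>R nL nR
              \<le> C * (real nL powr (1 / (\<alpha>L - 1)) * real nR powr (1 / (\<alpha>R - 1))
                     + zipf_mean \<alpha>L * real nL)"
  proof (intro exI[of _ 7] conjI allI impI)
    fix nL nR :: nat
    assume eq: "real nL * zipf_mean \<alpha>L = real nR * zipf_mean \<alpha>R"
    have "expected_time \<alpha>L \<alpha>R nL nR \<le> 7 * zipf_mean \<alpha>L * real nL"
      using core(1)[OF assms eq] .
    also have "\<dots> \<le> 7 * (real nL powr (1 / (\<alpha>L - 1)) * real nR powr (1 / (\<alpha>R - 1))
                     + zipf_mean \<alpha>L * real nL)"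
      by simp
    finally show "expected_time \<alpha>L \<alpha>R nL nR \<le> 7 * (real nL powr (1 / (\<alpha>L - 1)) * real nR powr (1 / (\<alpha>R - 1))
                     + zipf_mean \<alpha>L * real nL)" .
  qed simp
  show "\<exists>C>0. \<forall>nL nR :: nat. real nL * zipf_mean \<alpha>L = real nR * zipf_mean \<alpha>R \<longrightarrow>
              expected_time \<alpha>L \<alpha>R nL nR \<le> C * expected_edges \<alpha>L \<alpha>R nL nR"
  proof (intro exI[of _ "7 * zipf_mean \<alpha>L * zipf_mean \<alpha>R"] conjI allI impI)
    show "0 < 7 * zipf_mean \<alpha>L * zipf_mean \<alpha>R" using mL mR by simp
    fix nL nR :: nat
    assume eq: "real nL * zipf_mean \<alpha>L = real nR * zipf_mean \<alpha>R"
    have "expected_time \<alpha>L \<alpha>R nL nR \<le> 7 * zipf_mean \<alpha>L * real nL"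
      using core(1)[OF assms eq] .
    also have "\<dots> = (7 * zipf_mean \<alpha>L * zipf_mean \<alpha>R) * (real nL / zipf_mean \<alpha>R)"
      using mR by (simp add: field_simps)
    also have "\<dots> \<le> (7 * zipf_mean \<alpha>L * zipf_mean \<alpha>R) * expected_edges \<alpha>L \<alpha>R nL nR"
      using core(2)[OF assms eq] mL mR by (intro mult_left_mono) auto
    finally show "expected_time \<alpha>L \<alpha>R nL nR \<le> 7 * zipf_mean \<alpha>L * zipf_mean \<alpha>R * expected_edges \<alpha>L \<alpha>R nL nR" .
  qed
qed

end
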